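(* Let $q$ be a power of an odd prime $p$, $e\ge 2$, $r$ a positive integer, $a\in\mathbb{F}_{q^e}$ with $a\neq 0$, $f(x)=x^r(x^{q-1}+a)$, and $\ell=q^{e-1}+\cdots+q+1$. If $r\bmod\ell=hq+1$ for an integer $h$ with $p\nmid h$, then $f(x)$ does not permute $\mathbb{F}_{q^e}$.
   Context: $r\bmod\ell$ denotes the least nonnegative residue of $r$ modulo $\ell$. *)

theory Defs
  imports "HOL-Computational_Algebra.Primes"
begin

end

theory Submission
  imports Defs "HOL-Computational_Algebra.Computational_Algebra"
begin

lemma ff_pow_card1:
  fixes x :: "'a :: {field, finite}"
  assumes "x \<noteq> 0"
  shows "x ^ (card (UNIV :: 'a set) - 1) = 1"
proof -
  have "(\<Prod>y\<in>UNIV-{0}. x * y) = x ^ card (UNIV - {0 :: 'a}) * \<Prod>(UNIV-{0})"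
    by (simp add: prod.distrib)
  also have "card (UNIV - {0 :: 'a}) = card (UNIV :: 'a set) - 1"
    by (simp add: card_Diff_singleton)
  also have "(\<Prod>y\<in>UNIV-{0}. x * y) = (\<Prod>y\<in>UNIV-{0}. y)"
    by (rule prod.reindex_bij_witness[of _ "\<lambda>y. y / x" "\<lambda>y. x * y"]) (use assms in auto)
  finally have "\<Prod>(UNIV-{0::'a}) * 1 = \<Prod>(UNIV-{0}) * x ^ (card (UNIV :: 'a set) - 1)"
    by (simp add: mult_ac)
  moreover have "\<Prod>(UNIV-{0::'a}) \<noteq> 0" by simp
  ultimately show ?thesis by (metis mult_left_cancel)
qed

lemma ff_pow_mod:
  fixes x :: "'a :: {field, finite}"
  assumes "x \<noteq> 0"
  shows "x ^ m = x ^ (m mod (card (UNIV :: 'a set) - 1))"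
proof -
  let ?n = "card (UNIV :: 'a set) - 1"
  have "x ^ m = x ^ (?n * (m div ?n) + m mod ?n)" by (metis div_mult_mod_eq mult.commute)
  also have "\<dots> = (x ^ ?n) ^ (m div ?n) * x ^ (m mod ?n)" by (simp only: power_add power_mult)
  finally show ?thesis using ff_pow_card1[OF assms] by simp
qed

lemma ff_card_zero: "of_nat (card (UNIV :: 'a :: {field, finite} set)) = (0::'a)"
proof -
  have "(\<Sum>x\<in>UNIV. (x::'a) + 1) = (\<Sum>x\<in>UNIV. x)"
    by (rule sum.reindex_bij_witness[of _ "\<lambda>y. y - 1" "\<lambda>y. y + 1"]) auto
  thus ?thesis by (simp add: sum.distrib)
qed

lemma ff_exists_nonroot:
  fixes m :: nat
  assumes "0 < m" "m < card (UNIV :: 'a :: {field, finite} set) - 1"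
  shows "\<exists>c::'a. c \<noteq> 0 \<and> c ^ m \<noteq> 1"
proof (rule ccontr)
  assume "\<not> ?thesis"
  hence H: "\<And>c::'a. c \<noteq> 0 \<Longrightarrow> c ^ m = 1" by blast
  define P :: "'a poly" where "P = monom 1 m + [:-1:]"
  have degP: "degree P = m" using assms(1) unfolding P_def
    by (subst degree_add_eq_left) (auto simp: degree_monom_eq)
  hence "P \<noteq> 0" using assms(1) by auto
  have "UNIV - {0} \<subseteq> {x::'a. poly P x = 0}" using H by (auto simp: P_def poly_monom)
  hence "card (UNIV - {0::'a}) \<le> card {x::'a. poly P x = 0}"
    by (intro card_mono) (auto intro: poly_roots_finite[OF \<open>P \<noteq> 0\<close>])
  also have "\<dots> \<le> m" using card_poly_roots_bound[OF \<open>P \<noteq> 0\<close>] degP by simp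
  finally show False using assms by (simp add: card_Diff_singleton)
qed

lemma ff_power_sum:
  fixes m :: nat
  assumes "0 < m"
  shows "(\<Sum>x\<in>UNIV. (x :: 'a :: {field, finite}) ^ m) =
           (if (card (UNIV :: 'a set) - 1) dvd m then -1 else 0)"
proof (cases "(card (UNIV :: 'a set) - 1) dvd m")
  case True
  have "(\<Sum>x\<in>UNIV. (x :: 'a) ^ m) = (\<Sum>x\<in>UNIV-{0}. (x :: 'a) ^ m)"
    using assms by (intro sum.mono_neutral_right) auto
  also have "\<dots> = (\<Sum>x\<in>UNIV-{0::'a}. 1)"
    using True by (intro sum.cong) (auto simp: ff_pow_mod[of _ m])
  also have "\<dots> = of_nat (card (UNIV :: 'a set) - 1)" by (simp add: card_Diff_singleton)
  also have "\<dots> = of_nat (card (UNIV :: 'a set)) - 1"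
    by (simp add: of_nat_diff Suc_leI finite_UNIV_card_ge_0)
  also have "of_nat (card (UNIV :: 'a set)) = (0::'a)"
    by (rule ff_card_zero)
  finally show ?thesis using True by simp
next
  case False
  let ?n = "card (UNIV :: 'a set) - 1"
  have "card {0::'a, 1} \<le> card (UNIV :: 'a set)" by (rule card_mono) auto
  hence "?n > 0" by simp
  have m1: "m mod ?n \<noteq> 0" using False by (metis mod_0_imp_dvd)
  have m': "0 < m mod ?n" "m mod ?n < ?n" using m1 \<open>?n > 0\<close> by auto
  obtain c :: 'a where c: "c \<noteq> 0" "c ^ (m mod ?n) \<noteq> 1" using ff_exists_nonroot[OF m'] by blast
  have cm: "c ^ m \<noteq> 1" using c ff_pow_mod[OF c(1), of m] by simp
  have "(\<Sum>x\<in>UNIV. (x :: 'a) ^ m) = (\<Sum>x\<in>UNIV. (c * x) ^ m)"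
    by (rule sum.reindex_bij_witness[of _ "\<lambda>y. c * y" "\<lambda>y. y / c"]) (use c in auto)
  also have "\<dots> = c ^ m * (\<Sum>x\<in>UNIV. x ^ m)" by (simp add: power_mult_distrib sum_distrib_left)
  finally have "(1 - c ^ m) * (\<Sum>x\<in>UNIV. (x :: 'a) ^ m) = 0" by (simp add: algebra_simps)
  thus ?thesis using cm False by simp
qed


lemma ff_char:
  assumes "prime p" "card (UNIV :: 'a :: {field, finite} set) = p ^ n"
  shows "CHAR('a) = p"
proof -
  have pos: "CHAR('a) > 0" by (rule finite_imp_CHAR_pos) simp
  have pr: "prime CHAR('a)" by (rule prime_CHAR_semidom[OF pos])
  have "CHAR('a) dvd p ^ n"
    using ff_card_zero[where 'a='a] assms(2) of_nat_eq_0_iff_char_dvd by metis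
  hence "CHAR('a) dvd p" using pr prime_dvd_power by blast
  thus ?thesis using pr assms(1) by (simp add: primes_dvd_imp_eq)
qed

lemma ff_geom:
  fixes u a :: "'a :: {field, finite}"
  assumes "CHAR('a) = p" "prime p" "odd p" "Q = p ^ m" "m > 0"
  shows "(u + a) ^ (Q - 1) = (\<Sum>i<Q. u ^ i * (-a) ^ (Q - 1 - i))"
proof -
  have Q1: "Q > 1" using assms(2,4,5) by (metis one_less_power prime_gt_1_nat)
  have oQ: "odd Q" using assms(3,4) by simp
  have cQ: "of_nat Q = (0::'a)" using assms(1,4,5) by (simp add: of_nat_eq_0_iff_char_dvd)
  show ?thesis
  proof (cases "u + a = 0")
    case True
    hence u: "u = -a" by (simp add: add_eq_0_iff2)
    have "(\<Sum>i<Q. u ^ i * (-a) ^ (Q - 1 - i)) = (\<Sum>i<Q. (-a) ^ (Q - 1))"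
      using u by (intro sum.cong) (auto simp flip: power_add)
    also have "\<dots> = of_nat Q * (-a) ^ (Q - 1)" by simp
    finally show ?thesis using cQ True Q1 by simp
  next
    case False
    have "u ^ Q - (-a) ^ Q = (u - (-a)) * (\<Sum>i<Q. (-a) ^ (Q - Suc i) * u ^ i)"
      by (rule power_diff_sumr2)
    also have "(\<Sum>i<Q. (-a) ^ (Q - Suc i) * u ^ i) = (\<Sum>i<Q. u ^ i * (-a) ^ (Q - 1 - i))"
      by (intro sum.cong) (auto simp: mult.commute)
    also have "u ^ Q - (-a) ^ Q = u ^ Q + a ^ Q" using oQ by simp
    also have "u ^ Q + a ^ Q = (u + a) ^ Q"
      by (rule freshmans_dream'[symmetric]) (use assms in auto)
    also have "(u + a) ^ Q = (u + a) * (u + a) ^ (Q - 1)"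
      using Q1 by (metis Suc_diff_1 less_trans zero_less_one power_Suc)
    finally show ?thesis using False by simp
  qed
qed

lemma geom_nat: "(q - 1) * (\<Sum>i<n. q ^ i) + 1 = (q::nat) ^ n" if "q \<ge> 1"
proof (induction n)
  case (Suc n)
  have "(q - 1) * (\<Sum>i<Suc n. q ^ i) + 1 = ((q - 1) * (\<Sum>i<n. q ^ i) + 1) + (q - 1) * q ^ n"
    by (simp add: algebra_simps)
  also have "\<dots> = q ^ n + (q - 1) * q ^ n" using Suc by simp
  also have "\<dots> = q ^ Suc n" using that by (cases q) (auto simp: algebra_simps)
  finally show ?case .
qed simp

lemma geom_shift: "(\<Sum>i<Suc n. (q::nat) ^ i) = q * (\<Sum>i<n. q ^ i) + 1"
  by (simp add: sum.lessThan_Suc_shift sum_distrib_left del: sum.lessThan_Suc)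

lemma key_nat:
  fixes l L Q' hn i j X :: nat
  assumes "l = L + Q'" "hn < L" "L \<le> Q'" "i < Q'" "j < Q'"
    and "2 * L * r + i + j = l * X + (2 * L + i + j - 2 * hn)"
  shows "l dvd (2 * L * r + i + j) \<longleftrightarrow> i + j = Q' + 2 * hn - L"
proof -
  define w where "w = 2 * L + i + j - 2 * hn"
  have w: "0 < w" "w < 2 * l" using assms unfolding w_def by auto
  have "l dvd (2 * L * r + i + j) \<longleftrightarrow> l dvd w"
    using assms(6) unfolding w_def by (simp add: dvd_add_right_iff)
  also have "\<dots> \<longleftrightarrow> w = l"
  proof
    assume "l dvd w"
    then obtain c where c: "w = l * c" by blast
    hence "c \<noteq> 0" using w by auto
    moreover have "c < 2" using w c by (metis mult_less_cancel1 mult.commute)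
    ultimately show "w = l" using c by (cases c) auto
  qed auto
  also have "\<dots> \<longleftrightarrow> i + j = Q' + 2 * hn - L" using assms unfolding w_def by auto
  finally show ?thesis .
qed


theorem proposition4p3:
  fixes p k q e r :: nat and h :: int and a :: "'a :: {field, finite}"
  assumes "prime p" and "odd p" and "k \<ge> 1" and "q = p ^ k"
    and "card (UNIV :: 'a set) = q ^ e" and "e \<ge> 2" and "r > 0" and "a \<noteq> 0"
    and "int (r mod (\<Sum>i<e. q ^ i)) = h * int q + 1"
    and "\<not> int p dvd h"
  shows "\<not> bij (\<lambda>x::'a. x ^ r * (x ^ (q - 1) + a))"
proof
  assume bij: "bij (\<lambda>x::'a. x ^ r * (x ^ (q - 1) + a))"
  note pr = assms(1)
  have p3: "p \<ge> 3" using prime_ge_2_nat[OF pr] assms(2) by (cases "p = 2") auto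
  have "p ^ 1 \<le> p ^ k" by (rule power_increasing) (use assms(3) p3 in auto)
  hence q3: "q \<ge> 3" using p3 assms(4) by simp
  have char: "CHAR('a) = p" using ff_char[OF pr, of "k * e"] assms(4,5) by (simp add: power_mult)
  have cq: "of_nat q = (0::'a)" using assms(3,4) char by (simp add: of_nat_eq_0_iff_char_dvd)
  define n where "n = e - 1"
  have n1: "n \<ge> 1" and en: "e = Suc n" using assms(6) unfolding n_def by auto
  define Q' where "Q' = q ^ n"
  define L where "L = (\<Sum>i<n. q ^ i)"
  define l where "l = (\<Sum>i<e. q ^ i)"
  have F1: "l = q * L + 1" unfolding l_def L_def en by (rule geom_shift)
  have F2: "l = L + Q'" unfolding l_def L_def Q'_def en by simp
  have F3: "(q - 1) * L + 1 = Q'" unfolding L_def Q'_def using q3 by (intro geom_nat) simp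
  have F5: "card (UNIV :: 'a set) - 1 = (q - 1) * l"
    using geom_nat[of q e] q3 assms(5) unfolding l_def by simp
  have "1 * L \<le> (q - 1) * L" using q3 by (intro mult_le_mono1) simp
  hence LQ: "L \<le> Q'" using F3 by linarith
  have cQ': "of_nat Q' = (0::'a)" using cq n1 unfolding Q'_def by (simp add: of_nat_power)
  obtain n0 where n0: "n = Suc n0" using n1 by (cases n) auto
  have Lform: "L = q * (\<Sum>i<n0. q ^ i) + 1" by (simp only: L_def n0 geom_shift)
  have cL: "of_nat L = (1::'a)" using Lform cq by simp
  have Lpos: "L \<ge> 1" using Lform by simp
  have hnn: "h \<ge> 0"
  proof (rule ccontr)
    assume "\<not> h \<ge> 0"
    hence "h \<le> -1" by simp
    hence "h * int q \<le> - int q" using mult_right_mono[of h "-1" "int q"] by simp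
    thus False using assms(9) q3 by linarith
  qed
  obtain hn :: nat where hn: "h = int hn" using hnn by (metis nonneg_int_cases)
  have hn0: "hn \<noteq> 0" using assms(10) hn by (cases "hn = 0") auto
  have R: "r mod l = hn * q + 1" using assms(9) hn unfolding l_def by (simp flip: of_nat_mult of_nat_Suc) 
  have "r mod l < l" using F1 by simp
  hence "hn * q + 1 < L * q + 1" using R F1 by (metis mult.commute)
  hence "hn * q < L * q" by linarith
  hence hnL: "hn < L" by (meson mult_less_cancel2)
  have pdvd: "\<not> p dvd 2 * hn"
  proof
    assume "p dvd 2 * hn"
    hence "p dvd 2 \<or> p dvd hn" using pr prime_dvd_mult_iff by blast
    moreover have "\<not> p dvd 2" using p3 dvd_imp_le[of p 2] by auto
    moreover have "\<not> p dvd hn" using assms(10) hn by (metis int_dvd_int_iff)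
    ultimately show False by blast
  qed
  have c2h: "of_nat (2 * hn) \<noteq> (0::'a)" using pdvd char of_nat_eq_0_iff_char_dvd by metis
  define b where "b = - a"
  have b0: "b \<noteq> 0" using assms(8) unfolding b_def by simp
  define t where "t = 2 * (Q' - 1)"
  have tL: "t = (q - 1) * (2 * L)" using F3 unfolding t_def by (simp add: algebra_simps)
  have "q ^ 1 \<le> q ^ n" by (rule power_increasing) (use n1 q3 in auto)
  hence Qq: "Q' \<ge> q" unfolding Q'_def by simp
  have cardQ: "card (UNIV :: 'a set) = q * Q'" using assms(5) en unfolding Q'_def by simp
  have tpos: "t > 0" using Qq q3 unfolding t_def by simp
  have "q * Q' \<ge> 3 * Q'" using q3 by simp
  hence tlt: "t < card (UNIV :: 'a set) - 1" using cardQ Qq q3 unfolding t_def by linarith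
  have ndvd: "\<not> (card (UNIV :: 'a set) - 1) dvd t" using tpos tlt by (auto dest: dvd_imp_le)
  have "(\<Sum>x\<in>UNIV. (x ^ r * (x ^ (q - 1) + a)) ^ t) = (\<Sum>x\<in>UNIV. (x::'a) ^ t)"
    using sum.reindex_bij_betw[of "\<lambda>x::'a. x ^ r * (x ^ (q - 1) + a)" UNIV UNIV "\<lambda>z. z ^ t"] bij
    by simp
  also have "\<dots> = 0" using ff_power_sum[OF tpos, where 'a='a] ndvd by simp
  finally have zero: "(\<Sum>x\<in>UNIV. (x ^ r * (x ^ (q - 1) + a)) ^ t) = 0" .
  have kpos: "k * n > 0" using assms(3) n1 by simp
  have Q'p: "Q' = p ^ (k * n)" unfolding Q'_def assms(4) by (simp add: power_mult)
  have expand: "(x ^ r * (x ^ (q - 1) + a)) ^ t =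
      (\<Sum>i<Q'. \<Sum>j<Q'. b ^ (Q' - 1 - i) * b ^ (Q' - 1 - j) * x ^ ((q - 1) * (2 * L * r + i + j)))"
    for x :: 'a
  proof -
    have g: "(x ^ (q - 1) + a) ^ (Q' - 1) = (\<Sum>i<Q'. (x ^ (q - 1)) ^ i * b ^ (Q' - 1 - i))"
      unfolding b_def by (rule ff_geom[OF char pr assms(2) Q'p kpos])
    have "(x ^ r * (x ^ (q - 1) + a)) ^ t = x ^ (r * t) * ((x ^ (q - 1) + a) ^ (Q' - 1)) ^ 2"
    proof -
      have "t = (Q' - 1) * 2" unfolding t_def by simp
      hence "(x ^ (q - 1) + a) ^ t = ((x ^ (q - 1) + a) ^ (Q' - 1)) ^ 2" by (simp only: power_mult)
      moreover have "(x ^ r) ^ t = x ^ (r * t)" by (simp only: power_mult)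
      ultimately show ?thesis by (simp only: power_mult_distrib)
    qed
    also have "\<dots> = x ^ (r * t) * ((\<Sum>i<Q'. (x ^ (q - 1)) ^ i * b ^ (Q' - 1 - i)) *
                                      (\<Sum>j<Q'. (x ^ (q - 1)) ^ j * b ^ (Q' - 1 - j)))"
      by (simp only: g power2_eq_square)
    also have "\<dots> = (\<Sum>i<Q'. \<Sum>j<Q'. x ^ (r * t) * (((x ^ (q - 1)) ^ i * b ^ (Q' - 1 - i)) *
                                      ((x ^ (q - 1)) ^ j * b ^ (Q' - 1 - j))))"
      unfolding sum_product by (simp only: sum_distrib_left)
    also have "\<dots> = (\<Sum>i<Q'. \<Sum>j<Q'. b ^ (Q' - 1 - i) * b ^ (Q' - 1 - j) * x ^ ((q - 1) * (2 * L * r + i + j)))"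
    proof (intro sum.cong refl)
      fix i j
      have "x ^ ((q - 1) * (2 * L * r + i + j)) = x ^ (r * t) * (x ^ (q - 1)) ^ i * (x ^ (q - 1)) ^ j"
      proof -
        have rt: "r * t = (q - 1) * (2 * L * r)" unfolding tL by (simp add: mult_ac)
        have "x ^ ((q - 1) * (2 * L * r + i + j)) = (x ^ (q - 1)) ^ (2 * L * r + i + j)"
          by (simp only: power_mult)
        also have "\<dots> = (x ^ (q - 1)) ^ (2 * L * r) * (x ^ (q - 1)) ^ i * (x ^ (q - 1)) ^ j"
          by (simp only: power_add)
        also have "(x ^ (q - 1)) ^ (2 * L * r) = x ^ (r * t)" unfolding rt by (simp only: power_mult)
        finally show ?thesis .
      qed
      thus "x ^ (r * t) * (((x ^ (q - 1)) ^ i * b ^ (Q' - 1 - i)) * ((x ^ (q - 1)) ^ j * b ^ (Q' - 1 - j))) =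
            b ^ (Q' - 1 - i) * b ^ (Q' - 1 - j) * x ^ ((q - 1) * (2 * L * r + i + j))"
        by (simp add: mult_ac)
    qed
    finally show ?thesis .
  qed
  define \<sigma> where "\<sigma> = Q' + 2 * hn - L"
  define d where "d = r div l"
  have rdec: "r = l * d + (hn * q + 1)" unfolding d_def using R by (metis div_mult_mod_eq mult.commute)
  have E: "2 * L * (hn * q + 1) + 2 * hn = l * (2 * hn) + 2 * L" unfolding F1 by (simp add: algebra_simps)
  have cond: "l dvd (2 * L * r + i + j) \<longleftrightarrow> i + j = \<sigma>" if ij: "i < Q'" "j < Q'" for i j
  proof -
    have e1: "2 * L * r = 2 * L * (l * d) + 2 * L * (hn * q + 1)" using rdec by (simp add: add_mult_distrib2)
    have e2: "l * (2 * L * d + 2 * hn) = 2 * L * (l * d) + l * (2 * hn)" by (simp add: algebra_simps)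
    have "2 * L * r + i + j = l * (2 * L * d + 2 * hn) + (2 * L + i + j - 2 * hn)"
      using e1 e2 E hnL by linarith
    thus ?thesis unfolding \<sigma>_def by (rule key_nat[OF F2 hnL LQ ij])
  qed
  define B0 where "B0 = b ^ (2 * Q' - 2 - \<sigma>)"
  define P where "P = (\<lambda>i. i \<le> \<sigma> \<and> \<sigma> - i < Q')"
  have S1: "(\<Sum>x\<in>UNIV. (x ^ r * (x ^ (q - 1) + a)) ^ t) =
      (\<Sum>i<Q'. \<Sum>j<Q'. b ^ (Q' - 1 - i) * b ^ (Q' - 1 - j) * (\<Sum>x\<in>UNIV. (x::'a) ^ ((q - 1) * (2 * L * r + i + j))))"
    unfolding expand by (simp only: sum_distrib_left sum.swap[of _ UNIV])
  also have "\<dots> = (\<Sum>i<Q'. \<Sum>j<Q'. (if i + j = \<sigma> then - (b ^ (Q' - 1 - i) * b ^ (Q' - 1 - j)) else 0))"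
  proof (intro sum.cong refl)
    fix i j assume "i \<in> {..<Q'}" "j \<in> {..<Q'}"
    hence ij: "i < Q'" "j < Q'" by auto
    have pos: "(q - 1) * (2 * L * r + i + j) > 0" using q3 Lpos assms(7) by simp
    have dv: "(card (UNIV :: 'a set) - 1) dvd ((q - 1) * (2 * L * r + i + j)) \<longleftrightarrow> i + j = \<sigma>"
      unfolding F5 using q3 cond[OF ij] by (simp add: nat_mult_dvd_cancel_disj)
    show "b ^ (Q' - 1 - i) * b ^ (Q' - 1 - j) * (\<Sum>x\<in>UNIV. (x::'a) ^ ((q - 1) * (2 * L * r + i + j))) =
          (if i + j = \<sigma> then - (b ^ (Q' - 1 - i) * b ^ (Q' - 1 - j)) else 0)"
      using ff_power_sum[OF pos, where 'a='a] dv by simp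
  qed
  also have "\<dots> = (\<Sum>i<Q'. (if P i then - B0 else 0))"
  proof (intro sum.cong refl)
    fix i assume "i \<in> {..<Q'}"
    hence i: "i < Q'" by auto
    show "(\<Sum>j<Q'. (if i + j = \<sigma> then - (b ^ (Q' - 1 - i) * b ^ (Q' - 1 - j)) else 0)) =
          (if P i then - B0 else 0)"
    proof (cases "i \<le> \<sigma>")
      case True
      have "(\<Sum>j<Q'. (if i + j = \<sigma> then - (b ^ (Q' - 1 - i) * b ^ (Q' - 1 - j)) else 0)) =
            (\<Sum>j<Q'. (if j = \<sigma> - i then - (b ^ (Q' - 1 - i) * b ^ (Q' - 1 - j)) else 0))"
        using True by (intro sum.cong refl) auto
      also have "\<dots> = (if \<sigma> - i \<in> {..<Q'} then - (b ^ (Q' - 1 - i) * b ^ (Q' - 1 - (\<sigma> - i))) else 0)"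
        by (rule sum.delta) simp
      also have "\<dots> = (if P i then - B0 else 0)"
      proof (cases "\<sigma> - i < Q'")
        case True2: True
        have "(Q' - 1 - i) + (Q' - 1 - (\<sigma> - i)) = 2 * Q' - 2 - \<sigma>" using True True2 i by linarith
        hence "b ^ (Q' - 1 - i) * b ^ (Q' - 1 - (\<sigma> - i)) = B0" unfolding B0_def by (simp flip: power_add)
        thus ?thesis using True True2 unfolding P_def by simp
      qed (use True in \<open>auto simp: P_def\<close>)
      finally show ?thesis .
    qed (auto simp: P_def)
  qed
  also have "\<dots> = (\<Sum>i\<in>{i\<in>{..<Q'}. P i}. - B0)"
    by (rule sum.inter_filter[symmetric]) simp
  also have "\<dots> = - (of_nat (card {i\<in>{..<Q'}. P i}) * B0)" by simp
  finally have S2: "(\<Sum>x\<in>UNIV. (x ^ r * (x ^ (q - 1) + a)) ^ t) = - (of_nat (card {i\<in>{..<Q'}. P i}) * B0)" .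
  have B0nz: "B0 \<noteq> 0" unfolding B0_def using b0 by simp
  have sig: "\<sigma> + L = Q' + 2 * hn" unfolding \<sigma>_def using LQ by linarith
  have sigle: "\<sigma> \<le> 2 * Q' - 2" unfolding \<sigma>_def using hnL LQ by linarith
  have csig: "of_nat \<sigma> + 1 = (of_nat (2 * hn) :: 'a)"
  proof -
    have "(of_nat \<sigma> :: 'a) + of_nat L = of_nat Q' + of_nat (2 * hn)" using sig by (metis of_nat_add)
    thus ?thesis using cL cQ' by simp
  qed
  have cnt: "of_nat (card {i\<in>{..<Q'}. P i}) = (of_nat (2 * hn) :: 'a) \<or>
             of_nat (card {i\<in>{..<Q'}. P i}) = - (of_nat (2 * hn) :: 'a)"
  proof (cases "\<sigma> < Q'")
    case True
    have "{i\<in>{..<Q'}. P i} = {..\<sigma>}" using True unfolding P_def by auto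
    hence "card {i\<in>{..<Q'}. P i} = Suc \<sigma>" by simp
    thus ?thesis using csig by (simp add: add.commute)
  next
    case False
    have "{i\<in>{..<Q'}. P i} = {\<sigma> + 1 - Q'..<Q'}" using False unfolding P_def by auto
    hence "card {i\<in>{..<Q'}. P i} = Q' - (\<sigma> + 1 - Q')" by simp
    hence "card {i\<in>{..<Q'}. P i} + (\<sigma> + 1) = Q' + Q'" using False sigle Qq q3 by arith
    hence "(of_nat (card {i\<in>{..<Q'}. P i}) :: 'a) + (of_nat \<sigma> + 1) = of_nat Q' + of_nat Q'"
      by (metis of_nat_add of_nat_1)
    thus ?thesis using csig cQ' by (simp add: add_eq_0_iff2)
  qed
  have "(\<Sum>x\<in>UNIV. (x ^ r * (x ^ (q - 1) + a)) ^ t) \<noteq> 0"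
    unfolding S2 using cnt c2h B0nz by auto
  thus False using zero by simp
qed
end
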